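(* Let $X$ be a real Hilbert space and let $G$ be a closed convex subset of $X$. Suppose there exist $\epsilon,K>0$ such that $\epsilon B_X\subset G\subset K B_X$. If $u,w\in\partial G$ and $\cos(u,w)=\theta>0$, then $$\|u-w\|^2\le K^2\Bigl(\frac{K^2}{\epsilon^2}+1\Bigr)\frac{1-\theta^2}{\theta^2}.$$
   Context: $B_X$ is the closed unit ball of $X$, $\partial G$ the boundary of $G$, and for nonzero $u,w\in X$, $\cos(u,w)=\frac{\langle u,w\rangle}{\|u\|\|w\|}$. *)

theory Defs
  imports "HOL-Analysis.Analysis"
begin

end

theory Submission
  imports Defs
begin

lemma ray_out:
  fixes G :: "'a::real_normed_vector set"
  assumes "closed G" "convex G" "\<epsilon> > 0" "cball 0 \<epsilon> \<subseteq> G" "u \<in> frontier G" "s > 1"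
  shows "s *\<^sub>R u \<notin> G"
proof
  assume su: "s *\<^sub>R u \<in> G"
  have "ball u ((1 - 1/s) * \<epsilon>) \<subseteq> G"
  proof
    fix y assume y: "y \<in> ball u ((1 - 1/s) * \<epsilon>)"
    have pos: "1 - 1/s > 0" using assms(6) by (simp add: field_simps)
    define z where "z = (1 / (1 - 1/s)) *\<^sub>R (y - u)"
    have "norm z = norm (y - u) / (1 - 1/s)" using pos by (simp add: z_def)
    also have "\<dots> < \<epsilon>" using y pos by (simp add: dist_norm norm_minus_commute field_simps)
    finally have "z \<in> G" using assms(4) by auto
    have eq: "y = (1/s) *\<^sub>R (s *\<^sub>R u) + (1 - 1/s) *\<^sub>R z"
      using pos assms(6) by (simp add: z_def algebra_simps)
    have "0 \<le> 1/s" "1/s \<le> 1" using assms(6) by auto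
    then show "y \<in> G" unfolding eq using convexD[OF assms(2) su \<open>z \<in> G\<close>, of "1/s" "1 - 1/s"] by simp
  qed
  moreover have "(1 - 1/s) * \<epsilon> > 0" using assms(3,6) by (simp add: field_simps)
  ultimately have "u \<in> interior G" by (meson centre_in_ball interior_maximal open_ball subsetD)
  then show False using assms(5) by (simp add: frontier_def)
qed

lemma hull_bound:
  fixes G :: "'a::real_inner set"
  assumes "closed G" "convex G" "\<epsilon> > 0" "cball 0 \<epsilon> \<subseteq> G" "u \<in> frontier G" "w \<in> G" "u \<noteq> 0"
  shows "\<epsilon> * inner w u \<le> (norm u)\<^sup>2 * (\<epsilon> + norm (w - (inner w u / (norm u)\<^sup>2) *\<^sub>R u))"
proof -
  define c where "c = inner w u / (norm u)\<^sup>2"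
  define v where "v = w - c *\<^sub>R u"
  define l where "l = \<epsilon> / (\<epsilon> + norm v)"
  define z where "z = (if v = 0 then 0 else (- (\<epsilon> / norm v)) *\<^sub>R v)"
  have epos: "\<epsilon> + norm v > 0" using assms(3) by (simp add: add_pos_nonneg)
  have l01: "0 < l" "l \<le> 1" using assms(3) by (auto simp: l_def add_pos_nonneg)
  have zG: "z \<in> G" using assms(3,4) by (auto simp: z_def)
  have lz: "(1 - l) *\<^sub>R z = - (l *\<^sub>R v)"
  proof (cases "v = 0")
    case True then show ?thesis by (simp add: z_def)
  next
    case False
    have "1 - l = norm v / (\<epsilon> + norm v)" using epos False by (simp add: l_def field_simps)
    then show ?thesis using False by (simp add: z_def l_def)
  qed
  have p: "l *\<^sub>R w + (1 - l) *\<^sub>R z = (l * c) *\<^sub>R u" unfolding lz by (simp add: v_def algebra_simps)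
  have "l *\<^sub>R w + (1 - l) *\<^sub>R z \<in> G" using convexD[OF assms(2) assms(6) zG, of l "1-l"] l01 by simp
  then have "(l * c) *\<^sub>R u \<in> G" using p by simp
  then have "l * c \<le> 1" using ray_out[OF assms(1-5), of "l*c"] by fastforce
  then have "\<epsilon> * c \<le> \<epsilon> + norm v" using assms(3) by (simp add: l_def field_simps add_pos_nonneg)
  then have "(norm u)\<^sup>2 * (\<epsilon> * c) \<le> (norm u)\<^sup>2 * (\<epsilon> + norm v)" by (simp add: mult_left_mono)
  moreover have "(norm u)\<^sup>2 * (\<epsilon> * c) = \<epsilon> * inner w u" using assms(7) by (simp add: c_def)
  ultimately show ?thesis by (simp add: v_def c_def)
qed

lemma alg:
  fixes a b e K t s :: real
  assumes "0 < e" "e \<le> K" "0 < b" "b \<le> a" "a \<le> K" "0 < t" "t \<le> 1" "0 \<le> s" "s\<^sup>2 = 1 - t\<^sup>2"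
    and c: "e * a * t \<le> b * (e + a * s)"
  shows "a\<^sup>2 + b\<^sup>2 - 2*a*b*t \<le> K\<^sup>2 * (K\<^sup>2 / e\<^sup>2 + 1) * ((1 - t\<^sup>2) / t\<^sup>2)"
proof -
  have D: "e + a * s > 0" using assms by (simp add: add_pos_nonneg)
  have bs: "b\<^sup>2 * s\<^sup>2 = b\<^sup>2 - b\<^sup>2*t\<^sup>2" using assms(9) by (metis distrib_left mult.right_neutral eq_diff_eq)
  have 1: "a\<^sup>2 + b\<^sup>2 - 2*a*b*t = (a - b*t)\<^sup>2 + b\<^sup>2 * s\<^sup>2" unfolding bs by (simp add: power2_eq_square algebra_simps)
  have 2: "b * t \<ge> a * t\<^sup>2 * e / (e + a * s)"
  proof -
    have "a * t\<^sup>2 * e = t * (e * a * t)" by (simp add: power2_eq_square)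
    also have "\<dots> \<le> t * (b * (e + a * s))" using c assms(6) by (simp add: mult_left_mono)
    finally show ?thesis using D by (simp add: field_simps)
  qed
  have 3: "a - a * t\<^sup>2 * e / (e + a * s) = a * s * (e * s + a) / (e + a * s)"
  proof -
    have h: "t\<^sup>2 = 1 - s\<^sup>2" using assms(9) by simp
    show ?thesis unfolding h using D by (simp add: field_simps power2_eq_square)
  qed
  have 4: "a * s * (e * s + a) / (e + a * s) \<le> K\<^sup>2 * s / (e * t)"
  proof -
    have "a * (e * s + a) * (e * t) \<le> K\<^sup>2 * (e + a * s)"
    proof -
      have "a * (e * s + a) * (e * t) \<le> a * (e * s + a) * e"
        using assms by (intro mult_left_mono) (auto simp: mult_nonneg_nonneg)
      also have "\<dots> = a * e * e * s + a * a * e" by (simp add: algebra_simps)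
      also have "\<dots> \<le> a * K * K * s + K * K * e"
      proof -
        have "a * e * e * s \<le> a * K * K * s" using assms
          by (intro mult_right_mono mult_mono) auto
        moreover have "a * a * e \<le> K * K * e" using assms by (intro mult_right_mono mult_mono) auto
        ultimately show ?thesis by linarith
      qed
      also have "\<dots> = K\<^sup>2 * (e + a * s)" by (simp add: power2_eq_square algebra_simps)
      finally show ?thesis .
    qed
    then have "a * (e * s + a) * (e * t) * s \<le> K\<^sup>2 * (e + a * s) * s" using assms(8) by (rule mult_right_mono)
    then show ?thesis using D assms by (simp add: field_simps)
  qed
  have 5: "0 \<le> a - b * t" using assms mult_mono[of b a t 1] by auto
  have 6: "a - b * t \<le> K\<^sup>2 * s / (e * t)" using 2 3 4 by linarith
  have 7: "(a - b*t)\<^sup>2 \<le> (K\<^sup>2 * s / (e * t))\<^sup>2" using power_mono[OF 6 5] .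
  have 8: "b\<^sup>2 * s\<^sup>2 \<le> K\<^sup>2 * s\<^sup>2 / t\<^sup>2"
  proof -
    have "b\<^sup>2 \<le> K\<^sup>2" using assms by (intro power_mono) auto
    also have "K\<^sup>2 \<le> K\<^sup>2 / t\<^sup>2" using assms by (simp add: field_simps power_le_one)
    finally have "b\<^sup>2 * s\<^sup>2 \<le> K\<^sup>2 / t\<^sup>2 * s\<^sup>2" by (rule mult_right_mono) simp
    then show ?thesis by simp
  qed
  have 9: "(K\<^sup>2 * s / (e * t))\<^sup>2 + K\<^sup>2 * s\<^sup>2 / t\<^sup>2 = K\<^sup>2 * (K\<^sup>2 / e\<^sup>2 + 1) * ((1 - t\<^sup>2) / t\<^sup>2)"
    unfolding assms(9)[symmetric] using assms(1,6) by (simp add: field_simps power2_eq_square)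
  show ?thesis using 1 7 8 9 by linarith
qed

lemma proj_norm:
  fixes x y :: "'a::real_inner"
  assumes "x \<noteq> 0"
  shows "(norm (y - (inner y x / (norm x)\<^sup>2) *\<^sub>R x))\<^sup>2 = (norm y)\<^sup>2 - (inner y x)\<^sup>2 / (norm x)\<^sup>2"
proof -
  have nx: "(norm x)\<^sup>2 \<noteq> 0" using assms by simp
  have "(norm (y - (inner y x / (norm x)\<^sup>2) *\<^sub>R x))\<^sup>2
      = (norm y)\<^sup>2 - 2 * (inner y x / (norm x)\<^sup>2) * inner y x + (inner y x / (norm x)\<^sup>2)\<^sup>2 * (norm x)\<^sup>2"
    unfolding power2_norm_eq_inner by (simp add: inner_diff_left inner_diff_right inner_commute power2_eq_square algebra_simps)
  also have "\<dots> = (norm y)\<^sup>2 - (inner y x)\<^sup>2 / (norm x)\<^sup>2" using nx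
    by (simp add: field_simps power2_eq_square)
  finally show ?thesis .
qed

lemma half:
  fixes G :: "'a::{real_inner, complete_space} set"
    and \<epsilon> K \<theta> :: real and u w :: 'a
  assumes "closed G" and "convex G"
    and "\<epsilon> > 0" and "K > 0"
    and "cball 0 \<epsilon> \<subseteq> G" and "G \<subseteq> cball 0 K"
    and "u \<in> frontier G" and "w \<in> frontier G"
    and "u \<noteq> 0" and "w \<noteq> 0"
    and "inner u w / (norm u * norm w) = \<theta>" and "\<theta> > 0"
    and le: "norm w \<le> norm u"
  shows "(norm (u - w))\<^sup>2 \<le> K\<^sup>2 * (K\<^sup>2 / \<epsilon>\<^sup>2 + 1) * ((1 - \<theta>\<^sup>2) / \<theta>\<^sup>2)"
proof -
  define a where "a = norm u"
  define b where "b = norm w"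
  have apos: "a > 0" "b > 0" using assms(9,10) by (auto simp: a_def b_def)
  have uG: "u \<in> G" and wG: "w \<in> G" using assms(1,7,8) frontier_subset_closed by auto
  then have aK: "a \<le> K" "b \<le> K" using assms(6) by (auto simp: a_def b_def)
  have inn: "inner u w = a * b * \<theta>" using assms(11) apos by (simp add: a_def b_def field_simps)
  have t1: "\<theta> \<le> 1"
  proof -
    have "inner u w \<le> a * b" using norm_cauchy_schwarz[of u w] by (simp add: a_def b_def)
    then show ?thesis using inn apos by (simp add: mult_le_cancel_left1)
  qed
  have eK: "\<epsilon> \<le> K"
  proof -
    have "norm ((\<epsilon> / a) *\<^sub>R u) = \<epsilon>" using apos assms(3) by (simp add: a_def)
    then have "(\<epsilon> / a) *\<^sub>R u \<in> G" using assms(5) by auto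
    then have "norm ((\<epsilon> / a) *\<^sub>R u) \<le> K" using assms(6) by auto
    then show ?thesis using \<open>norm ((\<epsilon> / a) *\<^sub>R u) = \<epsilon>\<close> by simp
  qed
  define s where "s = sqrt (1 - \<theta>\<^sup>2)"
  have t2: "\<theta>\<^sup>2 \<le> 1" using t1 assms(12) by (simp add: power_le_one)
  have s0: "s \<ge> 0" and s2: "s\<^sup>2 = 1 - \<theta>\<^sup>2" using t2 by (auto simp: s_def)
  have pn: "norm (u - (inner u w / (norm w)\<^sup>2) *\<^sub>R w) = a * s"
  proof -
    have "(norm (u - (inner u w / (norm w)\<^sup>2) *\<^sub>R w))\<^sup>2 = a\<^sup>2 - (a*b*\<theta>)\<^sup>2 / b\<^sup>2"
      using proj_norm[OF assms(10), of u] inn by (simp add: a_def b_def)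
    also have "\<dots> = a\<^sup>2 * (1 - \<theta>\<^sup>2)" using apos by (simp add: field_simps power2_eq_square)
    also have "\<dots> = (a * s)\<^sup>2" by (simp add: s2 power_mult_distrib)
    finally show ?thesis using apos s0 by (simp add: power2_eq_iff_nonneg)
  qed
  have hb: "\<epsilon> * inner u w \<le> (norm w)\<^sup>2 * (\<epsilon> + norm (u - (inner u w / (norm w)\<^sup>2) *\<^sub>R w))"
    by (rule hull_bound[OF assms(1,2,3,5,8) uG assms(10)])
  then have "\<epsilon> * inner u w \<le> (norm w)\<^sup>2 * (\<epsilon> + a * s)" by (simp only: pn)
  then have "\<epsilon> * (a * b * \<theta>) \<le> b * (b * (\<epsilon> + a * s))" unfolding inn by (simp add: b_def power2_eq_square)
  then have c: "\<epsilon> * a * \<theta> \<le> b * (\<epsilon> + a * s)" using apos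
    by (metis mult.commute mult.left_commute mult_le_cancel_left_pos)
  have "(norm (u - w))\<^sup>2 = a\<^sup>2 + b\<^sup>2 - 2*a*b*\<theta>"
    using inn by (simp add: a_def b_def power2_norm_eq_inner inner_diff_left inner_diff_right inner_commute algebra_simps)
  also have "\<dots> \<le> K\<^sup>2 * (K\<^sup>2 / \<epsilon>\<^sup>2 + 1) * ((1 - \<theta>\<^sup>2) / \<theta>\<^sup>2)"
    by (rule alg[OF assms(3) eK apos(2) _ aK(1) assms(12) t1 s0 s2 c]) (use le in \<open>simp add: a_def b_def\<close>)
  finally show ?thesis .
qed

theorem lemma4p4:
  fixes G :: "'a::{real_inner, complete_space} set"
    and \<epsilon> K \<theta> :: real and u w :: 'a
  assumes "closed G" and "convex G"
    and "\<epsilon> > 0" and "K > 0"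
    and "cball 0 \<epsilon> \<subseteq> G" and "G \<subseteq> cball 0 K"
    and "u \<in> frontier G" and "w \<in> frontier G"
    and "u \<noteq> 0" and "w \<noteq> 0"
    and "inner u w / (norm u * norm w) = \<theta>" and "\<theta> > 0"
  shows "(norm (u - w))\<^sup>2 \<le> K\<^sup>2 * (K\<^sup>2 / \<epsilon>\<^sup>2 + 1) * ((1 - \<theta>\<^sup>2) / \<theta>\<^sup>2)"
proof (cases "norm w \<le> norm u")
  case True
  then show ?thesis by (rule half[OF assms])
next
  case False
  have "inner w u / (norm w * norm u) = \<theta>" using assms(11) by (simp add: inner_commute mult.commute)
  from half[OF assms(1-6,8,7,10,9) this assms(12)] False
  show ?thesis by (simp add: norm_minus_commute)
qed

end
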